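(* Let $n\ge4$. Let $U_n$ be the array obtained from $M_n$ by decreasing its $(2,2,2)$-entry by $1$ (all other entries unchanged). Then $U_n\in\mathcal C_n$, $U_n$ covers the minimum element $M_n$ in $(\mathcal C_n,\preceq)$ (so $U_n$ is join-irreducible), $\Xi^{-1}(U_n)_{2,2,2}=-1$, and hence $U_n\ne\Xi(H(L))$ for every Latin square $L\in\mathcal L_n$. Consequently $(\mathcal C_n,\preceq)$ is not the Dedekind–MacNeille completion of its subposet $\{\Xi(H(L)):L\in\mathcal L_n\}$.
   Context: Let $[n]=\{1,\dots,n\}$, $[0,n]=\{0,\dots,n\}$. A corner-sum hypermatrix of order $n$ is an integer array $C=(C_{i,j,k})_{i,j,k\in[0,n]}$ such that for all $i,j\in[0,n]$: $C_{i,j,0}=C_{i,0,j}=C_{0,i,j}=0$, $C_{i,j,n}=C_{i,n,j}=C_{n,i,j}=ij$, and for all $k\in[n]$ each of $C_{i,j,k}-C_{i,j,k-1}$, $C_{i,k,j}-C_{i,k-1,j}$, $C_{k,i,j}-C_{k-1,i,j}$ is an integer in $\{\max(0,i+j-n),\dots,\min(i,j)\}$. $\mathcal C_n$ is the set of these, ordered by $C\preceq D$ iff $C\ge D$ entrywise; its minimum is $M_n$ with $(M_n)_{i,j,k}=\min(k\min(i,j),\,ij-(n-k)\max(0,i+j-n))$. A Latin square of order $n$ is an $n\times n$ array over $[n]$ with each symbol once in each row and column; $\mathcal L_n$ is the set of them; $H(L)_{i,j,k}=1$ if $L_{i,j}=k$, else $0$. $\Xi(A)_{i,j,k}=\sum_{a\le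 i,b\le j,c\le k}A_{a,b,c}$ for $i,j,k\in[0,n]$, and $\Xi^{-1}(C)_{i,j,k}=C_{i,j,k}-C_{i-1,j,k}-C_{i,j-1,k}-C_{i,j,k-1}+C_{i-1,j-1,k}+C_{i-1,j,k-1}+C_{i,j-1,k-1}-C_{i-1,j-1,k-1}$ for $i,j,k\in[n]$. *)

theory Defs
  imports Main
begin

text \<open>Arrays indexed by [0,n]^3 are modelled as functions nat => nat => nat => int
  that vanish outside [0,n]^3.\<close>

type_synonym arr3 = "nat \<Rightarrow> nat \<Rightarrow> nat \<Rightarrow> int"

definition in_range :: "nat \<Rightarrow> nat \<Rightarrow> nat \<Rightarrow> nat \<Rightarrow> bool" where
  "in_range n i j k \<longleftrightarrow> i \<le> n \<and> j \<le> n \<and> k \<le> n"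

definition step_ok :: "nat \<Rightarrow> nat \<Rightarrow> nat \<Rightarrow> int \<Rightarrow> bool" where
  "step_ok n i j d \<longleftrightarrow> max 0 (int i + int j - int n) \<le> d \<and> d \<le> int (min i j)"

definition corner_sum :: "nat \<Rightarrow> arr3 \<Rightarrow> bool" where
  "corner_sum n C \<longleftrightarrow>
     (\<forall>i j k. \<not> in_range n i j k \<longrightarrow> C i j k = 0) \<and>
     (\<forall>i\<le>n. \<forall>j\<le>n.
        C i j 0 = 0 \<and> C i 0 j = 0 \<and> C 0 i j = 0 \<and>
        C i j n = int (i*j) \<and> C i n j = int (i*j) \<and> C n i j = int (i*j) \<and>
        (\<forall>k\<in>{1..n}.
           step_ok n i j (C i j k - C i j (k-1)) \<and>
           step_ok n i j (C i k j - C i (k-1) j) \<and>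
           step_ok n i j (C k i j - C (k-1) i j)))"

definition CS :: "nat \<Rightarrow> arr3 set" where
  "CS n = {C. corner_sum n C}"

definition prec :: "arr3 \<Rightarrow> arr3 \<Rightarrow> bool" where
  "prec C D \<longleftrightarrow> (\<forall>i j k. D i j k \<le> C i j k)"

definition Mmin :: "nat \<Rightarrow> arr3" where
  "Mmin n i j k = (if in_range n i j k then
      min (int k * int (min i j)) (int (i*j) - (int n - int k) * max 0 (int i + int j - int n))
    else 0)"

definition Uarr :: "nat \<Rightarrow> arr3" where
  "Uarr n i j k = (if (i, j, k) = (2, 2, 2) then Mmin n i j k - 1 else Mmin n i j k)"

definition covers_in :: "'a set \<Rightarrow> ('a \<Rightarrow> 'a \<Rightarrow> bool) \<Rightarrow> 'a \<Rightarrow> 'a \<Rightarrow> bool" where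
  "covers_in P le y x \<longleftrightarrow> x \<in> P \<and> y \<in> P \<and> le x y \<and> x \<noteq> y \<and>
     \<not> (\<exists>z\<in>P. le x z \<and> le z y \<and> z \<noteq> x \<and> z \<noteq> y)"

definition is_lub_in :: "'a set \<Rightarrow> ('a \<Rightarrow> 'a \<Rightarrow> bool) \<Rightarrow> 'a set \<Rightarrow> 'a \<Rightarrow> bool" where
  "is_lub_in P le A x \<longleftrightarrow> x \<in> P \<and> (\<forall>a\<in>A. le a x) \<and>
     (\<forall>y\<in>P. (\<forall>a\<in>A. le a y) \<longrightarrow> le x y)"

definition join_irreducible_in :: "'a set \<Rightarrow> ('a \<Rightarrow> 'a \<Rightarrow> bool) \<Rightarrow> 'a \<Rightarrow> bool" where
  "join_irreducible_in P le x \<longleftrightarrow> x \<in> P \<and> \<not> (\<forall>y\<in>P. le x y) \<and>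
     (\<forall>a\<in>P. \<forall>b\<in>P. is_lub_in P le {a, b} x \<longrightarrow> x = a \<or> x = b)"

definition latin_square :: "nat \<Rightarrow> (nat \<Rightarrow> nat \<Rightarrow> nat) \<Rightarrow> bool" where
  "latin_square n L \<longleftrightarrow>
     (\<forall>i\<in>{1..n}. bij_betw (\<lambda>j. L i j) {1..n} {1..n}) \<and>
     (\<forall>j\<in>{1..n}. bij_betw (\<lambda>i. L i j) {1..n} {1..n})"

definition Hmat :: "(nat \<Rightarrow> nat \<Rightarrow> nat) \<Rightarrow> arr3" where
  "Hmat L i j k = (if L i j = k then 1 else 0)"

definition Xi :: "nat \<Rightarrow> arr3 \<Rightarrow> arr3" where
  "Xi n A i j k = (if in_range n i j k then
      (\<Sum>a\<in>{1..i}. \<Sum>b\<in>{1..j}. \<Sum>c\<in>{1..k}. A a b c) else 0)"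

definition Xi_inv :: "arr3 \<Rightarrow> arr3" where
  "Xi_inv C i j k = C i j k - C (i-1) j k - C i (j-1) k - C i j (k-1)
      + C (i-1) (j-1) k + C (i-1) j (k-1) + C i (j-1) (k-1) - C (i-1) (j-1) (k-1)"

definition ub_in :: "'a set \<Rightarrow> ('a \<Rightarrow> 'a \<Rightarrow> bool) \<Rightarrow> 'a set \<Rightarrow> 'a set" where
  "ub_in S le A = {s\<in>S. \<forall>a\<in>A. le a s}"

definition lb_in :: "'a set \<Rightarrow> ('a \<Rightarrow> 'a \<Rightarrow> bool) \<Rightarrow> 'a set \<Rightarrow> 'a set" where
  "lb_in S le A = {s\<in>S. \<forall>a\<in>A. le s a}"

definition cuts :: "'a set \<Rightarrow> ('a \<Rightarrow> 'a \<Rightarrow> bool) \<Rightarrow> 'a set set" where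
  "cuts S le = {A. A \<subseteq> S \<and> A = lb_in S le (ub_in S le A)}"

definition is_DM_completion :: "'a set \<Rightarrow> ('a \<Rightarrow> 'a \<Rightarrow> bool) \<Rightarrow> 'a set \<Rightarrow> bool" where
  "is_DM_completion Q le S \<longleftrightarrow> S \<subseteq> Q \<and>
     (\<exists>\<phi>. bij_betw \<phi> Q (cuts S le) \<and>
          (\<forall>x\<in>Q. \<forall>y\<in>Q. le x y \<longleftrightarrow> \<phi> x \<subseteq> \<phi> y) \<and>
          (\<forall>p\<in>S. \<phi> p = {s\<in>S. le s p}))"

end

theory Submission
  imports Defs
begin

definition F :: "nat \<Rightarrow> nat \<Rightarrow> nat \<Rightarrow> nat \<Rightarrow> int" where
  "F n i j k = min (min (int k * int i) (int k * int j))
     (min (int i * int j) (int i*int j + int j*int k + int k*int i - int n*(int i+int j+int k) + int n*int n))"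

lemma kmin: "(k::int) \<ge> 0 \<Longrightarrow> k * min a b = min (k*a) (k*b)"
proof (cases "a \<le> b")
  case True
  assume "k \<ge> 0" then show ?thesis using True by (simp add: min_def mult_left_mono)
next
  case False
  assume "k \<ge> 0" then have "k*b \<le> k*a" using False by (simp add: mult_left_mono)
  then show ?thesis using False by (auto simp: min_def)
qed

lemma M_F: assumes "in_range n i j k" shows "Mmin n i j k = F n i j k"
proof -
  have r: "i \<le> n" "j \<le> n" "k \<le> n" using assms by (auto simp: in_range_def)
  define g where "g = int i*int j + int j*int k + int k*int i - int n*(int i+int j+int k) + int n*int n"
  have gd: "g - int i * int j = (int n - int k) * (int n - int i - int j)"
    unfolding g_def by (simp add: algebra_simps)
  have "int i * int j - (int n - int k) * max 0 (int i + int j - int n) = min (int i * int j) g"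
  proof (cases "i + j \<le> n")
    case True
    have "(int n - int k) * (int n - int i - int j) \<ge> 0" using True r by simp
    then show ?thesis using True gd by (simp add: max_def min_def)
  next
    case False
    have "(int n - int k) * (int n - int i - int j) \<le> 0" using False r
      by (simp add: mult_nonneg_nonpos)
    then show ?thesis using False gd by (simp add: max_def min_def algebra_simps)
  qed
  moreover have "int k * int (min i j) = min (int k * int i) (int k * int j)"
    by (simp add: kmin min_of_mono[symmetric] mono_def) 
  ultimately show ?thesis using assms unfolding Mmin_def F_def g_def
    by (simp add: of_nat_mult)
qed

lemma F_sym1: "F n i j k = F n j i k" unfolding F_def by (simp add: algebra_simps min.commute)
lemma F_sym2: "F n i j k = F n i k j" unfolding F_def
  by (simp add: algebra_simps min.commute min.left_commute min.assoc)

lemma step_F: assumes "i \<le> n" "j \<le> n" "k \<in> {1..n}"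
  shows "step_ok n i j (F n i j k - F n i j (k-1))"
proof -
  have r: "in_range n i j k" "in_range n i j (k-1)" using assms by (auto simp: in_range_def)
  define a where "a = int (min i j)"
  define b where "b = max 0 (int i + int j - int n)"
  have ab: "b \<le> a" "0 \<le> b" using assms unfolding a_def b_def by auto
  define x where "x = int (k-1) * a"
  define y where "y = int i * int j - (int n - int (k-1)) * b"
  have e1: "Mmin n i j (k-1) = min x y" using r unfolding Mmin_def x_def y_def a_def b_def
    by (simp add: of_nat_mult)
  have e2: "Mmin n i j k = min (x + a) (y + b)" using r assms unfolding Mmin_def x_def y_def a_def b_def
    by (simp add: of_nat_mult of_nat_diff algebra_simps)
  have "min x y + b \<le> min (x + a) (y + b)" "min (x + a) (y + b) \<le> min x y + a"
    using ab by (auto simp: min_def)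
  moreover have "F n i j k - F n i j (k-1) = min (x + a) (y + b) - min x y"
    using e1 e2 M_F[OF r(1)] M_F[OF r(2)] by simp
  ultimately have "b \<le> F n i j k - F n i j (k-1) \<and> F n i j k - F n i j (k-1) \<le> a" by linarith
  then show ?thesis unfolding step_ok_def a_def b_def by simp
qed


lemma Mperm: assumes "i \<le> n" "j \<le> n" "k \<le> n"
  shows "Mmin n i k j = Mmin n i j k" "Mmin n k i j = Mmin n i j k"
proof -
  have r: "in_range n i j k" "in_range n i k j" "in_range n k i j"
    using assms by (auto simp: in_range_def)
  show "Mmin n i k j = Mmin n i j k" using M_F[OF r(1)] M_F[OF r(2)] F_sym2 by simp
  show "Mmin n k i j = Mmin n i j k" using M_F[OF r(1)] M_F[OF r(3)] F_sym2 F_sym1 by metis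
qed

lemma M0: assumes "i \<le> n" "j \<le> n" shows "Mmin n i j 0 = 0"
proof -
  have "int i * int j - int n * max 0 (int i + int j - int n) \<ge> 0"
  proof (cases "i + j \<le> n")
    case True then have "max 0 (int i + int j - int n) = 0" by simp
    then show ?thesis by simp
  next
    case False
    have "int i * int j - int n * (int i + int j - int n) = (int n - int i) * (int n - int j)"
      by (simp add: algebra_simps)
    moreover have "(int n - int i) * (int n - int j) \<ge> 0" using assms by simp
    ultimately show ?thesis using False by (simp add: max_def)
  qed
  then show ?thesis using assms unfolding Mmin_def in_range_def by (simp add: of_nat_mult)
qed

lemma Mn: assumes "i \<le> n" "j \<le> n" shows "Mmin n i j n = int (i*j)"
proof -
  have "int i * int j \<le> int n * int (min i j)"
  proof (cases "i \<le> j")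
    case True
    have "int i * int j \<le> int i * int n" by (rule mult_left_mono) (use assms in auto)
    then show ?thesis using True by (simp add: mult.commute)
  next
    case False
    have "int i * int j \<le> int n * int j" by (rule mult_right_mono) (use assms in auto)
    then show ?thesis using False by simp
  qed
  then show ?thesis using assms unfolding Mmin_def in_range_def by (simp add: of_nat_mult)
qed

lemma step_M: assumes "i \<le> n" "j \<le> n" "k \<in> {1..n}"
  shows "step_ok n i j (Mmin n i j k - Mmin n i j (k-1))"
proof -
  have r: "in_range n i j k" "in_range n i j (k-1)" using assms by (auto simp: in_range_def)
  show ?thesis using step_F[OF assms] M_F[OF r(1)] M_F[OF r(2)] by simp
qed

lemma M_out: "\<not> in_range n i j k \<Longrightarrow> Mmin n i j k = 0" by (simp add: Mmin_def)

lemma M_CS: "Mmin n \<in> CS n"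
  unfolding CS_def corner_sum_def
proof (intro CollectI conjI allI impI ballI)
  fix i j k assume "\<not> in_range n i j k" then show "Mmin n i j k = 0" by (rule M_out)
next
  fix i j assume a: "i \<le> n" "j \<le> n"
  show "Mmin n i j 0 = 0" using M0 a by simp
  show "Mmin n i 0 j = 0" using M0 a Mperm[of i n j 0] by simp
  show "Mmin n 0 i j = 0" using M0 a Mperm[of i n j 0] Mperm[of 0 n i j] Mperm[of i n 0 j] by simp
  show "Mmin n i j n = int (i*j)" using Mn a by simp
  show "Mmin n i n j = int (i*j)" using Mn a Mperm[of i n j n] by simp
  show "Mmin n n i j = int (i*j)" using Mn a Mperm[of i n j n] Mperm[of n n i j] Mperm[of i n n j] by simp
  fix k assume k: "k \<in> {1..n}"
  have k1: "k - 1 \<le> n" "k \<le> n" using k by auto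
  show "step_ok n i j (Mmin n i j k - Mmin n i j (k-1))" using step_M a k by simp
  show "step_ok n i j (Mmin n i k j - Mmin n i (k-1) j)"
    using step_M[OF a k] a k Mperm(1)[OF a k1(2)] Mperm(2)[OF a k1(2)] Mperm(1)[OF a k1(1)] Mperm(2)[OF a k1(1)] by simp
  show "step_ok n i j (Mmin n k i j - Mmin n (k-1) i j)"
    using step_M[OF a k] a k Mperm(1)[OF a k1(2)] Mperm(2)[OF a k1(2)] Mperm(1)[OF a k1(1)] Mperm(2)[OF a k1(1)] by simp
qed


lemma U_eq: "Uarr n i j k = Mmin n i j k - (if i = 2 \<and> j = 2 \<and> k = 2 then 1 else 0)"
  unfolding Uarr_def by auto

lemma Uperm: assumes "i \<le> n" "j \<le> n" "k \<le> n"
  shows "Uarr n i k j = Uarr n i j k" "Uarr n k i j = Uarr n i j k"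
  using Mperm[OF assms] unfolding U_eq by auto

lemma Mvals: assumes "n \<ge> 4"
  shows "Mmin n 2 2 1 = 2" "Mmin n 2 2 2 = 4" "Mmin n 2 2 3 = 4"
    "Mmin n 1 1 1 = 1" "Mmin n 1 1 2 = 1" "Mmin n 1 2 1 = 1" "Mmin n 2 1 1 = 1"
    "Mmin n 1 2 2 = 2" "Mmin n 2 1 2 = 2"
  using assms unfolding Mmin_def in_range_def by (simp_all add: max_def)

lemma step_U: assumes "n \<ge> 4" "i \<le> n" "j \<le> n" "k \<in> {1..n}"
  shows "step_ok n i j (Uarr n i j k - Uarr n i j (k-1))"
proof (cases "i = 2 \<and> j = 2 \<and> (k = 2 \<or> k = 3)")
  case True
  then show ?thesis using Mvals[OF assms(1)] assms(1) unfolding U_eq step_ok_def by auto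
next
  case False
  then have "Uarr n i j k = Mmin n i j k" "Uarr n i j (k-1) = Mmin n i j (k-1)"
    unfolding U_eq by auto
  then show ?thesis using step_M[OF assms(2-4)] by simp
qed

lemma U_CS: assumes "n \<ge> 4" shows "Uarr n \<in> CS n"
  unfolding CS_def corner_sum_def
proof (intro CollectI conjI allI impI ballI)
  fix i j k assume "\<not> in_range n i j k" then show "Uarr n i j k = 0"
    using M_out[of n i j k] assms unfolding U_eq in_range_def by auto
next
  fix i j assume a: "i \<le> n" "j \<le> n"
  have M: "Mmin n \<in> CS n" by (rule M_CS)
  then have Mc: "Mmin n i j 0 = 0 \<and> Mmin n i 0 j = 0 \<and> Mmin n 0 i j = 0 \<and>
        Mmin n i j n = int (i*j) \<and> Mmin n i n j = int (i*j) \<and> Mmin n n i j = int (i*j)"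
    using a unfolding CS_def corner_sum_def by blast
  show "Uarr n i j 0 = 0" "Uarr n i 0 j = 0" "Uarr n 0 i j = 0"
    "Uarr n i j n = int (i*j)" "Uarr n i n j = int (i*j)" "Uarr n n i j = int (i*j)"
    using Mc assms unfolding U_eq by auto
  fix k assume k: "k \<in> {1..n}"
  have k1: "k - 1 \<le> n" "k \<le> n" using k by auto
  show "step_ok n i j (Uarr n i j k - Uarr n i j (k-1))" using step_U assms a k by simp
  show "step_ok n i j (Uarr n i k j - Uarr n i (k-1) j)"
    using step_U[OF assms a k] Uperm(1)[OF a k1(2)] Uperm(1)[OF a k1(1)] by simp
  show "step_ok n i j (Uarr n k i j - Uarr n (k-1) i j)"
    using step_U[OF assms a k] Uperm(2)[OF a k1(2)] Uperm(2)[OF a k1(1)] by simp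
qed

lemma CS_le_M: assumes "C \<in> CS n" shows "C i j k \<le> Mmin n i j k"
proof (cases "in_range n i j k")
  case False
  then show ?thesis using assms M_out[OF False] unfolding CS_def corner_sum_def by auto
next
  case True
  then have a: "i \<le> n" "j \<le> n" "k \<le> n" by (auto simp: in_range_def)
  have c: "\<And>k. k \<in> {1..n} \<Longrightarrow> step_ok n i j (C i j k - C i j (k-1))"
    and c0: "C i j 0 = 0" and cn: "C i j n = int (i*j)"
    using assms a unfolding CS_def corner_sum_def by auto
  have up: "k \<le> n \<Longrightarrow> C i j k \<le> int k * int (min i j)" for k
  proof (induction k)
    case 0 then show ?case using c0 by simp
  next
    case (Suc k)
    have "step_ok n i j (C i j (Suc k) - C i j k)" using c[of "Suc k"] Suc.prems by simp
    then show ?case using Suc by (simp add: step_ok_def algebra_simps)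
  qed
  have dn: "d \<le> n \<Longrightarrow> C i j (n-d) \<le> int i * int j - int d * max 0 (int i + int j - int n)" for d
  proof (induction d)
    case 0 then show ?case using cn by (simp add: of_nat_mult)
  next
    case (Suc d)
    have "step_ok n i j (C i j (Suc (n - Suc d)) - C i j (n - Suc d))"
      using c[of "Suc (n - Suc d)"] Suc.prems by simp
    moreover have "Suc (n - Suc d) = n - d" using Suc.prems by simp
    ultimately show ?case using Suc by (simp add: step_ok_def algebra_simps)
  qed
  have "C i j k \<le> int i * int j - int (n - k) * max 0 (int i + int j - int n)"
    using dn[of "n-k"] a by simp
  then show ?thesis using up[OF a(3)] True a unfolding Mmin_def by (simp add: of_nat_mult of_nat_diff)
qed

lemma Xi_inv_Xi: assumes "n \<ge> 2" shows "Xi_inv (Xi n A) 2 2 2 = A 2 2 2"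
proof -
  have s: "{1..2::nat} = {1,2}" by auto
  show ?thesis using assms unfolding Xi_inv_def Xi_def in_range_def s by simp
qed


lemma between: assumes "n \<ge> 4" "C \<in> CS n" "\<forall>i j k. Uarr n i j k \<le> C i j k"
  shows "C = Uarr n \<or> C = Mmin n"
proof (cases "C 2 2 2 = Mmin n 2 2 2")
  case True
  have "C i j k = Mmin n i j k" for i j k
  proof -
    have "Uarr n i j k \<le> C i j k" using assms(3) by blast
    then show ?thesis using CS_le_M[OF assms(2), of i j k] True unfolding U_eq
      by (cases "i = 2 \<and> j = 2 \<and> k = 2") auto
  qed
  then show ?thesis by blast
next
  case False
  have "C i j k = Uarr n i j k" for i j k
  proof -
    have "Uarr n i j k \<le> C i j k" using assms(3) by blast
    then show ?thesis using CS_le_M[OF assms(2), of i j k] False unfolding U_eq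
      by (cases "i = 2 \<and> j = 2 \<and> k = 2") auto
  qed
  then show ?thesis by blast
qed

theorem mainTheorem16:
  fixes n :: nat
  assumes "n \<ge> 4"
  shows "Uarr n \<in> CS n
    \<and> covers_in (CS n) prec (Uarr n) (Mmin n)
    \<and> join_irreducible_in (CS n) prec (Uarr n)
    \<and> Xi_inv (Uarr n) 2 2 2 = -1
    \<and> (\<forall>L. latin_square n L \<longrightarrow> Uarr n \<noteq> Xi n (Hmat L))
    \<and> \<not> is_DM_completion (CS n) prec {Xi n (Hmat L) | L. latin_square n L}"
proof -
  have UC: "Uarr n \<in> CS n" using U_CS[OF assms] .
  have MC: "Mmin n \<in> CS n" by (rule M_CS)
  have UleM: "prec (Mmin n) (Uarr n)" unfolding prec_def U_eq by auto
  have UneM: "Uarr n \<noteq> Mmin n"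
  proof
    assume "Uarr n = Mmin n"
    then have "Uarr n 2 2 2 = Mmin n 2 2 2" by simp
    then show False unfolding U_eq by simp
  qed
  have notMU: "\<not> prec (Uarr n) (Mmin n)"
    unfolding prec_def U_eq by (auto intro!: exI[of _ 2])
  have betw: "\<And>C. C \<in> CS n \<Longrightarrow> prec C (Uarr n) \<Longrightarrow> C = Uarr n \<or> C = Mmin n"
    using between[OF assms] unfolding prec_def by blast
  have cov: "covers_in (CS n) prec (Uarr n) (Mmin n)"
  proof -
    have "\<not> (\<exists>z\<in>CS n. prec (Mmin n) z \<and> prec z (Uarr n) \<and> z \<noteq> Mmin n \<and> z \<noteq> Uarr n)"
    proof
      assume "\<exists>z\<in>CS n. prec (Mmin n) z \<and> prec z (Uarr n) \<and> z \<noteq> Mmin n \<and> z \<noteq> Uarr n"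
      then obtain z where "z \<in> CS n" "prec z (Uarr n)" "z \<noteq> Mmin n" "z \<noteq> Uarr n" by blast
      then show False using betw by blast
    qed
    then show ?thesis unfolding covers_in_def using UC MC UleM UneM by simp
  qed
  have XiU: "Xi_inv (Uarr n) 2 2 2 = -1"
    using Mvals[OF assms] unfolding Xi_inv_def U_eq by simp
  have notS: "Uarr n \<noteq> Xi n (Hmat L)" for L
  proof
    assume "Uarr n = Xi n (Hmat L)"
    then have "Xi_inv (Uarr n) 2 2 2 = Hmat L 2 2 2" using Xi_inv_Xi[of n "Hmat L"] assms by simp
    then show False using XiU unfolding Hmat_def by (simp split: if_splits)
  qed
  have ji: "join_irreducible_in (CS n) prec (Uarr n)"
    unfolding join_irreducible_in_def
  proof (intro conjI ballI impI)
    show "Uarr n \<in> CS n" by (rule UC)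
    show "\<not> (\<forall>y\<in>CS n. prec (Uarr n) y)" using MC notMU by blast
    fix a b assume ab: "a \<in> CS n" "b \<in> CS n" and l: "is_lub_in (CS n) prec {a, b} (Uarr n)"
    have "prec a (Uarr n)" "prec b (Uarr n)" using l unfolding is_lub_in_def by auto
    then have "a = Uarr n \<or> a = Mmin n" "b = Uarr n \<or> b = Mmin n" using betw ab by auto
    moreover have "\<not> (a = Mmin n \<and> b = Mmin n)"
    proof
      assume "a = Mmin n \<and> b = Mmin n"
      then have "prec (Uarr n) (Mmin n)" using l MC unfolding is_lub_in_def prec_def by auto
      then show False using notMU by simp
    qed
    ultimately show "Uarr n = a \<or> Uarr n = b" by auto
  qed
  have notDM: "\<not> is_DM_completion (CS n) prec {Xi n (Hmat L) | L. latin_square n L}"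
  proof
    define S where "S = {Xi n (Hmat L) | L. latin_square n L}"
    assume "is_DM_completion (CS n) prec {Xi n (Hmat L) | L. latin_square n L}"
    then obtain \<phi> where SQ: "S \<subseteq> CS n" and bij: "bij_betw \<phi> (CS n) (cuts S prec)"
      and iso: "\<forall>x\<in>CS n. \<forall>y\<in>CS n. prec x y \<longleftrightarrow> \<phi> x \<subseteq> \<phi> y"
      and pr: "\<forall>p\<in>S. \<phi> p = {s\<in>S. prec s p}"
      unfolding is_DM_completion_def S_def by blast
    have refl: "prec x x" for x unfolding prec_def by simp
    have trans: "prec x y \<Longrightarrow> prec y z \<Longrightarrow> prec x z" for x y z
      unfolding prec_def by (meson order_trans)
    have phi: "\<phi> X = {s\<in>S. prec s X}" if X: "X \<in> CS n" for X
    proof -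
      have cut: "\<phi> X \<in> cuts S prec" using bij X by (auto simp: bij_betw_def)
      then have sub: "\<phi> X \<subseteq> S" and eq: "\<phi> X = lb_in S prec (ub_in S prec (\<phi> X))"
        unfolding cuts_def by auto
      show ?thesis
      proof (intro set_eqI iffI)
        fix s assume s: "s \<in> \<phi> X"
        then have sS: "s \<in> S" using sub by auto
        have "\<phi> s \<subseteq> \<phi> X"
        proof
          fix t assume "t \<in> \<phi> s"
          then have tS: "t \<in> S" and ts: "prec t s" using pr sS by auto
          have "t \<in> lb_in S prec (ub_in S prec (\<phi> X))"
            unfolding lb_in_def ub_in_def using tS ts s trans by blast
          then show "t \<in> \<phi> X" using eq by simp
        qed
        then have "prec s X" using iso sS SQ X by auto
        then show "s \<in> {s \<in> S. prec s X}" using sS by simp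
      next
        fix s assume "s \<in> {s \<in> S. prec s X}"
        then have sS: "s \<in> S" and sX: "prec s X" by auto
        then have "\<phi> s \<subseteq> \<phi> X" using iso SQ X by auto
        moreover have "s \<in> \<phi> s" using pr sS refl by auto
        ultimately show "s \<in> \<phi> X" by auto
      qed
    qed
    have "{s\<in>S. prec s (Uarr n)} = {s\<in>S. prec s (Mmin n)}"
    proof (intro set_eqI iffI)
      fix s assume "s \<in> {s\<in>S. prec s (Uarr n)}"
      then have sS: "s \<in> S" and "prec s (Uarr n)" by auto
      then have "s = Uarr n \<or> s = Mmin n" using betw SQ by auto
      moreover have "s \<noteq> Uarr n" using sS notS unfolding S_def by (auto dest: sym)
      ultimately show "s \<in> {s\<in>S. prec s (Mmin n)}" using sS refl by auto
    next
      fix s assume "s \<in> {s\<in>S. prec s (Mmin n)}"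
      then show "s \<in> {s\<in>S. prec s (Uarr n)}" using UleM trans by auto
    qed
    then have "\<phi> (Uarr n) = \<phi> (Mmin n)" using phi UC MC by simp
    then have "Uarr n = Mmin n" using bij UC MC unfolding bij_betw_def inj_on_def by blast
    then show False using UneM by simp
  qed
  show ?thesis using UC cov ji XiU notS notDM by blast
qed

end
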